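(* Let $n\geq 4$ and let $\delta: VT_n\to\mathrm{GL}_{n+1}(\mathbb{C})$ be a homogeneous $3$-local representation of the virtual twin group $VT_n$. Then $\delta$ is reducible.
   Context: The virtual twin group $VT_n$ ($n\geq 2$) has generators $s_1,\dots,s_{n-1},\rho_1,\dots,\rho_{n-1}$ and defining relations: $s_i^2=1$ ($1\le i\le n-1$); $s_is_j=s_js_i$ ($|i-j|\ge2$); $\rho_i\rho_{i+1}\rho_i=\rho_{i+1}\rho_i\rho_{i+1}$ ($1\le i\le n-2$); $\rho_i\rho_j=\rho_j\rho_i$ ($|i-j|\ge2$); $\rho_i^2=1$; $s_i\rho_j=\rho_js_i$ ($|i-j|\ge2$); $\rho_i\rho_{i+1}s_i=s_{i+1}\rho_i\rho_{i+1}$ ($1\le i\le n-2$). A representation $\delta:VT_n\to\mathrm{GL}_{n+1}(\mathbb{C})$ is homogeneous $3$-local if there are fixed $M,N\in\mathrm{GL}_3(\mathbb{C})$ with $\delta(s_i)=\mathrm{diag}(I_{i-1},M,I_{n-i-1})$ and $\delta(\rho_i)=\mathrm{diag}(I_{i-1},N,I_{n-i-1})$ for all $1\le i\le n-1$ (block-diagonal, $I_r$ the $r\times r$ identity). Reducible means there is a subspace $0\neq U\neq\mathbb{C}^{n+1}$ invariant under all $\delta(g)$. *)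

theory Defs
  imports "Jordan_Normal_Form.Matrix"
begin

text \<open>The block matrix diag(I_{i-1}, A, I_{n-i-1}) of size (n+1) x (n+1),
  for 1 <= i <= n-1 and a 3x3 matrix A; rows/columns are 0-based, so the
  block A occupies rows and columns i-1, i, i+1.\<close>
definition local_mat :: "nat \<Rightarrow> nat \<Rightarrow> complex mat \<Rightarrow> complex mat" where
  "local_mat n i A = mat (n+1) (n+1) (\<lambda>(r,c).
     if i - 1 \<le> r \<and> r \<le> i + 1 \<and> i - 1 \<le> c \<and> c \<le> i + 1
     then A $$ (r - (i - 1), c - (i - 1))
     else if r = c then 1 else 0)"

text \<open>delta(s_i) = local_mat n i M, delta(rho_i) = local_mat n i N, with M, N in GL_3(C).
  Such an assignment on generators defines a homomorphism on VT_n iff the images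
  satisfy all defining relations of VT_n.\<close>
definition homog_3local_rep :: "nat \<Rightarrow> complex mat \<Rightarrow> complex mat \<Rightarrow> bool" where
  "homog_3local_rep n M N \<longleftrightarrow>
     M \<in> carrier_mat 3 3 \<and> N \<in> carrier_mat 3 3 \<and> invertible_mat M \<and> invertible_mat N \<and>
     (let S = (\<lambda>i. local_mat n i M); R = (\<lambda>i. local_mat n i N); I = 1\<^sub>m (n+1) in
       (\<forall>i\<in>{1..n-1}. S i * S i = I) \<and>
       (\<forall>i\<in>{1..n-1}. \<forall>j\<in>{1..n-1}. (i + 2 \<le> j \<or> j + 2 \<le> i) \<longrightarrow> S i * S j = S j * S i) \<and>
       (\<forall>i\<in>{1..n-2}. R i * R (i+1) * R i = R (i+1) * R i * R (i+1)) \<and>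
       (\<forall>i\<in>{1..n-1}. \<forall>j\<in>{1..n-1}. (i + 2 \<le> j \<or> j + 2 \<le> i) \<longrightarrow> R i * R j = R j * R i) \<and>
       (\<forall>i\<in>{1..n-1}. R i * R i = I) \<and>
       (\<forall>i\<in>{1..n-1}. \<forall>j\<in>{1..n-1}. (i + 2 \<le> j \<or> j + 2 \<le> i) \<longrightarrow> S i * R j = R j * S i) \<and>
       (\<forall>i\<in>{1..n-2}. R i * R (i+1) * S i = S (i+1) * R i * R (i+1)))"

text \<open>The image delta(VT_n): all products of generator images. Since every
  generator of VT_n is an involution, this is the full image of the group.\<close>
inductive_set rep_image :: "nat \<Rightarrow> complex mat \<Rightarrow> complex mat \<Rightarrow> complex mat set"
  for n M N where
  one: "1\<^sub>m (n+1) \<in> rep_image n M N"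
| gen_s: "A \<in> rep_image n M N \<Longrightarrow> 1 \<le> i \<Longrightarrow> i \<le> n - 1 \<Longrightarrow> A * local_mat n i M \<in> rep_image n M N"
| gen_rho: "A \<in> rep_image n M N \<Longrightarrow> 1 \<le> i \<Longrightarrow> i \<le> n - 1 \<Longrightarrow> A * local_mat n i N \<in> rep_image n M N"

definition is_subspace :: "nat \<Rightarrow> complex vec set \<Rightarrow> bool" where
  "is_subspace d U \<longleftrightarrow> U \<subseteq> carrier_vec d \<and> 0\<^sub>v d \<in> U \<and>
     (\<forall>u\<in>U. \<forall>v\<in>U. u + v \<in> U) \<and> (\<forall>a. \<forall>u\<in>U. a \<cdot>\<^sub>v u \<in> U)"

definition reducible_rep :: "nat \<Rightarrow> complex mat \<Rightarrow> complex mat \<Rightarrow> bool" where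
  "reducible_rep n M N \<longleftrightarrow> (\<exists>U. is_subspace (n+1) U \<and> U \<noteq> {0\<^sub>v (n+1)} \<and> U \<noteq> carrier_vec (n+1) \<and>
     (\<forall>A\<in>rep_image n M N. \<forall>u\<in>U. A *\<^sub>v u \<in> U))"

end

theory Submission
  imports Defs
begin

lemma local_mat_idx:
  "r < n+1 \<Longrightarrow> c < n+1 \<Longrightarrow> local_mat n i A $$ (r,c) =
     (if i - 1 \<le> r \<and> r \<le> i + 1 \<and> i - 1 \<le> c \<and> c \<le> i + 1
     then A $$ (r - (i - 1), c - (i - 1))
     else if r = c then 1 else 0)"
  by (simp add: local_mat_def)

lemma local_mat_carrier[simp]: "local_mat n i A \<in> carrier_mat (n+1) (n+1)"
  by (simp add: local_mat_def)

lemma local_mat_dims[simp]: "dim_row (local_mat n i A) = n+1" "dim_col (local_mat n i A) = n+1"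
  by (simp_all add: local_mat_def)

lemma local_mult_idx:
  "r < n+1 \<Longrightarrow> c < n+1 \<Longrightarrow> (local_mat n i A * local_mat n j B) $$ (r,c) =
     (\<Sum>k\<in>{0..<n+1}. local_mat n i A $$ (r,k) * local_mat n j B $$ (k, c))"
  by (simp add: index_mult_mat scalar_prod_def del: upt_Suc atLeastLessThanSuc)

lemma sum_single:
  fixes f :: "nat \<Rightarrow> complex"
  assumes "k < m" "\<And>j. j < m \<Longrightarrow> j \<noteq> k \<Longrightarrow> f j = 0"
  shows "sum f {0..<m} = f k"
proof -
  have "sum f {0..<m} = f k + sum f ({0..<m} - {k})"
    using assms(1) by (simp add: sum.remove)
  also have "sum f ({0..<m} - {k}) = 0"
    using assms(2) by (intro sum.neutral) auto
  finally show ?thesis by simp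
qed

lemma sum_zero_all:
  fixes f :: "nat \<Rightarrow> complex"
  assumes "\<And>j. j < m \<Longrightarrow> f j = 0"
  shows "sum f {0..<m} = 0"
  using assms by (intro sum.neutral) auto

lemma comm_consequence:
  assumes n: "n \<ge> 4" and a: "a \<le> 1" and b: "1 \<le> b" "b \<le> 2"
    and eq: "local_mat n 1 A * local_mat n 3 B = local_mat n 3 B * local_mat n 1 A"
  shows "A $$ (a,2) * B $$ (0,b) = 0"
proof -
  have ar: "a < n+1" and cr: "2+b < n+1" using n a b by auto
  have "(local_mat n 1 A * local_mat n 3 B) $$ (a, 2+b)
     = (\<Sum>k\<in>{0..<n+1}. local_mat n 1 A $$ (a,k) * local_mat n 3 B $$ (k, 2+b))"
    using ar cr by (rule local_mult_idx)
  also have "\<dots> = local_mat n 1 A $$ (a,2) * local_mat n 3 B $$ (2, 2+b)"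
    by (rule sum_single) (use n a b in \<open>auto simp: local_mat_idx\<close>)
  also have "\<dots> = A $$ (a,2) * B $$ (0,b)"
    using n a b by (simp add: local_mat_idx)
  finally have l: "(local_mat n 1 A * local_mat n 3 B) $$ (a, 2+b) = A $$ (a,2) * B $$ (0,b)" .
  have "(local_mat n 3 B * local_mat n 1 A) $$ (a, 2+b)
     = (\<Sum>k\<in>{0..<n+1}. local_mat n 3 B $$ (a,k) * local_mat n 1 A $$ (k, 2+b))"
    using ar cr by (rule local_mult_idx)
  also have "\<dots> = 0"
    by (rule sum_zero_all) (use n a b in \<open>auto simp: local_mat_idx\<close>)
  finally show ?thesis using l eq by simp
qed


lemma rep_image_carrier: "A \<in> rep_image n M N \<Longrightarrow> A \<in> carrier_mat (n+1) (n+1)"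
  by (induction rule: rep_image.induct) auto

lemma rep_image_inv:
  assumes U: "U \<subseteq> carrier_vec (n+1)"
    and hM: "\<And>i u. 1 \<le> i \<Longrightarrow> i \<le> n - 1 \<Longrightarrow> u \<in> U \<Longrightarrow> local_mat n i M *\<^sub>v u \<in> U"
    and hN: "\<And>i u. 1 \<le> i \<Longrightarrow> i \<le> n - 1 \<Longrightarrow> u \<in> U \<Longrightarrow> local_mat n i N *\<^sub>v u \<in> U"
    and A: "A \<in> rep_image n M N"
  shows "\<forall>u\<in>U. A *\<^sub>v u \<in> U"
  using A
proof (induction rule: rep_image.induct)
  case one
  then show ?case using U by auto
next
  case (gen_s A i)
  show ?case
  proof
    fix u assume u: "u \<in> U"
    have "A * local_mat n i M *\<^sub>v u = A *\<^sub>v (local_mat n i M *\<^sub>v u)"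
      using rep_image_carrier[OF gen_s.hyps(1)] u U
      by (intro assoc_mult_mat_vec) auto
    then show "A * local_mat n i M *\<^sub>v u \<in> U" using gen_s hM u by auto
  qed
next
  case (gen_rho A i)
  show ?case
  proof
    fix u assume u: "u \<in> U"
    have "A * local_mat n i N *\<^sub>v u = A *\<^sub>v (local_mat n i N *\<^sub>v u)"
      using rep_image_carrier[OF gen_rho.hyps(1)] u U
      by (intro assoc_mult_mat_vec) auto
    then show "A * local_mat n i N *\<^sub>v u \<in> U" using gen_rho hN u by auto
  qed
qed

lemma local_mult_vec_idx:
  "u \<in> carrier_vec (n+1) \<Longrightarrow> k < n+1 \<Longrightarrow> (local_mat n i X *\<^sub>v u) $ k =
     (\<Sum>j\<in>{0..<n+1}. local_mat n i X $$ (k,j) * u $ j)"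
  by (simp add: scalar_prod_def del: upt_Suc atLeastLessThanSuc)

definition U1 :: "nat \<Rightarrow> complex vec set" where
  "U1 n = {v \<in> carrier_vec (n+1). \<forall>k<n. v $ k = 0}"

definition U2 :: "nat \<Rightarrow> complex vec set" where
  "U2 n = {v \<in> carrier_vec (n+1). v $ 0 = 0}"

lemma U1_sub: "is_subspace (n+1) (U1 n)"
  unfolding is_subspace_def U1_def by auto

lemma U2_sub: "is_subspace (n+1) (U2 n)"
  unfolding is_subspace_def U2_def by auto

lemma U1_inv:
  assumes X: "X $$ (0,2) = 0" "X $$ (1,2) = 0" and i: "1 \<le> i" "i \<le> n - 1" and n: "n \<ge> 4"
    and u: "u \<in> U1 n"
  shows "local_mat n i X *\<^sub>v u \<in> U1 n"
proof -
  have uc: "u \<in> carrier_vec (n+1)" and u0: "\<And>k. k < n \<Longrightarrow> u $ k = 0" using u by (auto simp: U1_def)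
  have "(local_mat n i X *\<^sub>v u) $ k = 0" if k: "k < n" for k
  proof -
    have "(local_mat n i X *\<^sub>v u) $ k = (\<Sum>j\<in>{0..<n+1}. local_mat n i X $$ (k,j) * u $ j)"
      using uc k by (intro local_mult_vec_idx) auto
    also have "\<dots> = local_mat n i X $$ (k,n) * u $ n"
      by (rule sum_single) (use u0 in auto)
    also have "local_mat n i X $$ (k,n) = 0"
    proof (cases "i = n - 1")
      case True
      then have "k - (i - 1) = 0 \<or> k - (i - 1) = 1 \<or> \<not> (i - 1 \<le> k)" using k n by auto
      moreover have "n - (i - 1) = 2" using True n by auto
      ultimately show ?thesis using k True X by (auto simp: local_mat_idx)
    next
      case False
      then show ?thesis using k i by (auto simp: local_mat_idx)
    qed
    finally show ?thesis by simp
  qed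
  moreover have "local_mat n i X *\<^sub>v u \<in> carrier_vec (n+1)"
    by (rule mult_mat_vec_carrier[OF local_mat_carrier uc])
  ultimately show ?thesis unfolding U1_def by blast
qed

lemma U2_inv:
  assumes X: "X $$ (0,1) = 0" "X $$ (0,2) = 0" and i: "1 \<le> i" "i \<le> n - 1" and n: "n \<ge> 4"
    and u: "u \<in> U2 n"
  shows "local_mat n i X *\<^sub>v u \<in> U2 n"
proof -
  have uc: "u \<in> carrier_vec (n+1)" and u0: "u $ 0 = 0" using u by (auto simp: U2_def)
  have "(local_mat n i X *\<^sub>v u) $ 0 = (\<Sum>j\<in>{0..<n+1}. local_mat n i X $$ (0,j) * u $ j)"
    using uc by (intro local_mult_vec_idx) auto
  also have "\<dots> = local_mat n i X $$ (0,0) * u $ 0"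
  proof (rule sum_single)
    fix j assume j: "j < n+1" "j \<noteq> 0"
    have "local_mat n i X $$ (0,j) = 0"
    proof (cases "i = 1 \<and> j \<le> 2")
      case True
      then have "j = 1 \<or> j = 2" using j by auto
      then show ?thesis using True X j by (auto simp: local_mat_idx)
    next
      case False
      then show ?thesis using j i by (auto simp: local_mat_idx)
    qed
    then show "local_mat n i X $$ (0,j) * u $ j = 0" by simp
  qed auto
  moreover have "local_mat n i X *\<^sub>v u \<in> carrier_vec (n+1)"
    by (rule mult_mat_vec_carrier[OF local_mat_carrier uc])
  ultimately show ?thesis using u0 unfolding U2_def by simp
qed

theorem theorem4p3:
  fixes n :: nat and M N :: "complex mat"
  assumes "n \<ge> 4" and "homog_3local_rep n M N"
  shows "reducible_rep n M N"
proof -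
  note n = assms(1)
  have one3: "(1::nat) \<in> {1..n-1}" "(3::nat) \<in> {1..n-1}" and d: "(1::nat) + 2 \<le> 3" using n by auto
  have H: "(\<forall>i\<in>{1..n-1}. \<forall>j\<in>{1..n-1}. (i + 2 \<le> j \<or> j + 2 \<le> i) \<longrightarrow> local_mat n i M * local_mat n j M = local_mat n j M * local_mat n i M) \<and>
       (\<forall>i\<in>{1..n-1}. \<forall>j\<in>{1..n-1}. (i + 2 \<le> j \<or> j + 2 \<le> i) \<longrightarrow> local_mat n i N * local_mat n j N = local_mat n j N * local_mat n i N) \<and>
       (\<forall>i\<in>{1..n-1}. \<forall>j\<in>{1..n-1}. (i + 2 \<le> j \<or> j + 2 \<le> i) \<longrightarrow> local_mat n i M * local_mat n j N = local_mat n j N * local_mat n i M)"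
    using assms(2) unfolding homog_3local_rep_def Let_def by (elim conjE) (intro conjI)
  have cMM: "local_mat n 1 M * local_mat n 3 M = local_mat n 3 M * local_mat n 1 M"
    using H one3 d by simp
  have cNN: "local_mat n 1 N * local_mat n 3 N = local_mat n 3 N * local_mat n 1 N"
    using H one3 d by simp
  have cMN: "local_mat n 1 M * local_mat n 3 N = local_mat n 3 N * local_mat n 1 M"
    using H one3 d by simp
  have cNM0: "local_mat n 3 M * local_mat n 1 N = local_mat n 1 N * local_mat n 3 M"
    using H one3 d by simp
  have cNM: "local_mat n 1 N * local_mat n 3 M = local_mat n 3 M * local_mat n 1 N"
    using cNM0 by simp
  have key: "A $$ (a,2) * B $$ (0,b) = 0"
    if "A \<in> {M,N}" "B \<in> {M,N}" "a \<le> 1" "1 \<le> b" "b \<le> 2" for A B a b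
  proof -
    have "local_mat n 1 A * local_mat n 3 B = local_mat n 3 B * local_mat n 1 A"
    proof -
      have "A = M \<or> A = N" "B = M \<or> B = N" using that(1,2) by simp_all
      then show ?thesis using cMM cNN cMN cNM by metis
    qed
    then show ?thesis using comm_consequence[OF n that(3-5)] by blast
  qed
  show ?thesis
  proof (cases "M $$ (0,2) = 0 \<and> M $$ (1,2) = 0 \<and> N $$ (0,2) = 0 \<and> N $$ (1,2) = 0")
    case True
    have inv: "\<forall>A\<in>rep_image n M N. \<forall>u\<in>U1 n. A *\<^sub>v u \<in> U1 n"
    proof
      fix A assume A: "A \<in> rep_image n M N"
      show "\<forall>u\<in>U1 n. A *\<^sub>v u \<in> U1 n"
      proof (rule rep_image_inv[OF _ _ _ A])
        show "U1 n \<subseteq> carrier_vec (n+1)" unfolding U1_def by blast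
        show "local_mat n i M *\<^sub>v u \<in> U1 n" if "1 \<le> i" "i \<le> n - 1" "u \<in> U1 n" for i u
          using U1_inv[of M i n u] that n True by blast
        show "local_mat n i N *\<^sub>v u \<in> U1 n" if "1 \<le> i" "i \<le> n - 1" "u \<in> U1 n" for i u
          using U1_inv[of N i n u] that n True by blast
      qed
    qed
    have c1: "unit_vec (n+1) n \<in> carrier_vec (n+1)" by (rule unit_vec_carrier)
    have z1: "unit_vec (n+1) n $ k = 0" if "k < n" for k
      using that by simp
    have e1: "unit_vec (n+1) n \<in> U1 n" unfolding U1_def using c1 z1 by blast
    have o1: "unit_vec (n+1) 0 $ 0 = (1::complex)" by simp
    have e2: "unit_vec (n+1) 0 \<notin> U1 n"
    proof
      assume "unit_vec (n+1) 0 \<in> U1 n"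
      then have "\<forall>k<n. unit_vec (n+1) 0 $ k = (0::complex)" unfolding U1_def by blast
      moreover have "(0::nat) < n" using n by simp
      ultimately have "unit_vec (n+1) 0 $ 0 = (0::complex)" by blast
      then show False using o1 by simp
    qed
    have "unit_vec (n+1) n $ n = (1::complex)" by simp
    moreover have "0\<^sub>v (n+1) $ n = (0::complex)" by simp
    ultimately have "unit_vec (n+1) n \<noteq> (0\<^sub>v (n+1) :: complex vec)" by (metis zero_neq_one)
    then have ne: "U1 n \<noteq> {0\<^sub>v (n+1)}" using e1 by blast
    have nc: "U1 n \<noteq> carrier_vec (n+1)" using e2 unit_vec_carrier by blast
    show ?thesis unfolding reducible_rep_def
      by (rule exI[of _ "U1 n"]) (use U1_sub ne nc inv in blast)
  next
    case False
    then obtain A a where A: "A \<in> {M,N}" "a \<le> 1" "A $$ (a,2) \<noteq> 0"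
    proof -
      assume h: "\<And>A a. A \<in> {M,N} \<Longrightarrow> a \<le> 1 \<Longrightarrow> A $$ (a,2) \<noteq> 0 \<Longrightarrow> thesis"
      show thesis
      proof (cases "M $$ (0,2) = 0 \<and> M $$ (1,2) = 0")
        case True
        then have "N $$ (0,2) \<noteq> 0 \<or> N $$ (1,2) \<noteq> 0" using False by blast
        then show thesis using h[of N 0] h[of N 1] by auto
      next
        case False
        then show thesis using h[of M 0] h[of M 1] by auto
      qed
    qed
    have z: "B $$ (0,1) = 0" "B $$ (0,2) = 0" if "B \<in> {M,N}" for B
      using key[OF A(1) that A(2)] A(3) by auto
    have inv: "\<forall>A\<in>rep_image n M N. \<forall>u\<in>U2 n. A *\<^sub>v u \<in> U2 n"
    proof
      fix A assume A: "A \<in> rep_image n M N"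
      show "\<forall>u\<in>U2 n. A *\<^sub>v u \<in> U2 n"
      proof (rule rep_image_inv[OF _ _ _ A])
        show "U2 n \<subseteq> carrier_vec (n+1)" unfolding U2_def by blast
        show "local_mat n i M *\<^sub>v u \<in> U2 n" if "1 \<le> i" "i \<le> n - 1" "u \<in> U2 n" for i u
          using U2_inv[of M i n u] that n z[of M] by blast
        show "local_mat n i N *\<^sub>v u \<in> U2 n" if "1 \<le> i" "i \<le> n - 1" "u \<in> U2 n" for i u
          using U2_inv[of N i n u] that n z[of N] by blast
      qed
    qed
    have n1: "1 < n+1" using n by simp
    have c1: "unit_vec (n+1) 1 \<in> carrier_vec (n+1)" by (rule unit_vec_carrier)
    have z1: "unit_vec (n+1) 1 $ 0 = (0::complex)" using n1 by simp
    have e1: "unit_vec (n+1) 1 \<in> U2 n" unfolding U2_def using c1 z1 by blast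
    have o1: "unit_vec (n+1) 0 $ 0 = (1::complex)" by simp
    have e2: "unit_vec (n+1) 0 \<notin> U2 n"
    proof
      assume "unit_vec (n+1) 0 \<in> U2 n"
      then have "unit_vec (n+1) 0 $ 0 = (0::complex)" unfolding U2_def by blast
      then show False using o1 by simp
    qed
    have "unit_vec (n+1) 1 $ 1 = (1::complex)" using n1 by simp
    moreover have "0\<^sub>v (n+1) $ 1 = (0::complex)" using n1 by simp
    ultimately have "unit_vec (n+1) 1 \<noteq> (0\<^sub>v (n+1) :: complex vec)" by (metis zero_neq_one)
    then have ne: "U2 n \<noteq> {0\<^sub>v (n+1)}" using e1 by blast
    have nc: "U2 n \<noteq> carrier_vec (n+1)" using e2 unit_vec_carrier by blast
    show ?thesis unfolding reducible_rep_def
      by (rule exI[of _ "U2 n"]) (use U2_sub ne nc inv in blast)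
  qed
qed

end
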